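(* Let $G$ be a strongly connected directed multigraph with a designated set of ordinary vertices such that every two distinct ordinary vertices are $(k+1)$-edge-connected, and let $s$ be a fixed ordinary vertex. Let $u$ and $w$ be two ordinary vertices that are not $(k+2)$-edge-connected. Then either $M(u)\neq M(w)$, or $M_R(u)\neq M_R(w)$.
   Context: For a vertex set $S$, $\mathit{out}(S)$ is the number of edges leaving $S$; $S$ is a $j$-out set if $\mathit{out}(S)=j$. For vertices $x,y$, $\lambda(x,y)$ is the minimum of $\mathit{out}(S)$ over vertex sets $S$ with $x\in S$, $y\notin S$. Two vertices $x,y$ are $j$-edge-connected if $\lambda(x,y)\ge j$ and $\lambda(y,x)\ge j$. For a vertex $v$ with $\lambda(v,s)\ge k+1$: if there is a $(k+1)$-out set $S$ with $v\in S$, $s\notin S$, then $M(v)$ denotes the inclusion-wise minimum such $(k+1)$-out set (it exists); otherwise $M(v)=\bot$. $M_R(v)$ denotes the same notion defined in the reverse graph $G^R$ (all edges reversed). *)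

theory Defs
  imports Main "HOL-Library.Multiset"
begin

definition multigraph :: "'a set \<Rightarrow> ('a \<times> 'a) multiset \<Rightarrow> bool" where
  "multigraph V E \<longleftrightarrow> finite V \<and> (\<forall>e \<in># E. fst e \<in> V \<and> snd e \<in> V)"

definition strongly_connected :: "'a set \<Rightarrow> ('a \<times> 'a) multiset \<Rightarrow> bool" where
  "strongly_connected V E \<longleftrightarrow> (\<forall>x\<in>V. \<forall>y\<in>V. (x, y) \<in> (set_mset E)\<^sup>*)"

definition rev_edges :: "('a \<times> 'a) multiset \<Rightarrow> ('a \<times> 'a) multiset" where
  "rev_edges E = image_mset prod.swap E"

definition out :: "('a \<times> 'a) multiset \<Rightarrow> 'a set \<Rightarrow> nat" where
  "out E S = size (filter_mset (\<lambda>e. fst e \<in> S \<and> snd e \<notin> S) E)"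

definition lam :: "'a set \<Rightarrow> ('a \<times> 'a) multiset \<Rightarrow> 'a \<Rightarrow> 'a \<Rightarrow> nat" where
  "lam V E x y = Min (out E ` {S. S \<subseteq> V \<and> x \<in> S \<and> y \<notin> S})"

definition edge_connected :: "'a set \<Rightarrow> ('a \<times> 'a) multiset \<Rightarrow> nat \<Rightarrow> 'a \<Rightarrow> 'a \<Rightarrow> bool" where
  "edge_connected V E j x y \<longleftrightarrow> lam V E x y \<ge> j \<and> lam V E y x \<ge> j"

definition sep_out_set :: "'a set \<Rightarrow> ('a \<times> 'a) multiset \<Rightarrow> nat \<Rightarrow> 'a \<Rightarrow> 'a \<Rightarrow> 'a set \<Rightarrow> bool" where
  "sep_out_set V E j s v S \<longleftrightarrow> S \<subseteq> V \<and> v \<in> S \<and> s \<notin> S \<and> out E S = j"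

text \<open>M(v): the inclusion-wise minimum (k+1)-out set containing v and not s,
  if some (k+1)-out set with v in S and s not in S exists; None represents bottom.\<close>
definition Mset :: "'a set \<Rightarrow> ('a \<times> 'a) multiset \<Rightarrow> nat \<Rightarrow> 'a \<Rightarrow> 'a \<Rightarrow> 'a set option" where
  "Mset V E k s v =
     (if \<exists>S. sep_out_set V E (k+1) s v S
      then Some (THE S. sep_out_set V E (k+1) s v S \<and>
                        (\<forall>T. sep_out_set V E (k+1) s v T \<longrightarrow> S \<subseteq> T))
      else None)"

definition Mset_R :: "'a set \<Rightarrow> ('a \<times> 'a) multiset \<Rightarrow> nat \<Rightarrow> 'a \<Rightarrow> 'a \<Rightarrow> 'a set option" where
  "Mset_R V E k s v = Mset V (rev_edges E) k s v"

end

theory Submission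
  imports Defs
begin

lemma out_add: "out (add_mset e E) S = out E S + (if fst e \<in> S \<and> snd e \<notin> S then 1 else 0)"
  by (simp add: out_def)

lemma out_submod: "out E (A \<inter> B) + out E (A \<union> B) \<le> out E A + out E B"
proof (induction E)
  case empty
  then show ?case by (simp add: out_def)
next
  case (add e E)
  then show ?case by (simp add: out_add)
qed

lemma out_rev:
  assumes "\<forall>e\<in>#E. fst e \<in> V \<and> snd e \<in> V" "S \<subseteq> V"
  shows "out (rev_edges E) S = out E (V - S)"
  using assms(1)
proof (induction E)
  case empty
  then show ?case by (simp add: out_def rev_edges_def)
next
  case (add e E)
  have "out (rev_edges (add_mset e E)) S = out (rev_edges E) S + (if snd e \<in> S \<and> fst e \<notin> S then 1 else 0)"
    by (cases e) (simp add: rev_edges_def out_add)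
  also have "\<dots> = out E (V - S) + (if fst e \<in> V - S \<and> snd e \<notin> V - S then 1 else 0)"
    using add by auto
  finally show ?case by (simp add: out_add)
qed

lemma lam_le:
  assumes "finite V" "j \<le> lam V E x y" "S \<subseteq> V" "x \<in> S" "y \<notin> S"
  shows "j \<le> out E S"
proof -
  have "finite {S. S \<subseteq> V \<and> x \<in> S \<and> y \<notin> S}" by (rule finite_subset[of _ "Pow V"]) (use assms(1) in auto)
  then have "lam V E x y \<le> out E S" unfolding lam_def using assms by (intro Min_le) auto
  then show ?thesis using assms(2) by simp
qed

lemma Mset_min:
  assumes fin: "finite V"
    and lb: "\<forall>T. T \<subseteq> V \<and> v \<in> T \<and> s \<notin> T \<longrightarrow> k+1 \<le> out E T"
    and S: "sep_out_set V E (k+1) s v S"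
  shows "\<exists>X. Mset V E k s v = Some X \<and> sep_out_set V E (k+1) s v X \<and> X \<subseteq> S"
proof -
  define F where "F = {T. sep_out_set V E (k+1) s v T}"
  have closed: "A \<inter> B \<in> F" if "A \<in> F" "B \<in> F" for A B
  proof -
    have A: "A \<subseteq> V" "v \<in> A" "s \<notin> A" "out E A = k+1" and B: "B \<subseteq> V" "v \<in> B" "s \<notin> B" "out E B = k+1"
      using that by (auto simp: F_def sep_out_set_def)
    have "k+1 \<le> out E (A \<inter> B)" "k+1 \<le> out E (A \<union> B)"
      by (rule lb[rule_format]; use A B in auto)+
    moreover have "out E (A \<inter> B) + out E (A \<union> B) \<le> out E A + out E B" by (rule out_submod)
    ultimately have "out E (A \<inter> B) = k+1" using A B by linarith
    then show ?thesis using A B by (auto simp: F_def sep_out_set_def)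
  qed
  have finF: "finite F" unfolding F_def sep_out_set_def
    by (rule finite_subset[of _ "Pow V"]) (use fin in auto)
  have inter: "\<Inter>G \<in> F" if "finite G" "G \<noteq> {}" "G \<subseteq> F" for G
    using that
  proof (induction G rule: finite_ne_induct)
    case (singleton x)
    then show ?case by simp
  next
    case (insert x G)
    then have "x \<in> F" "\<Inter>G \<in> F" by auto
    then show ?case using closed by simp
  qed
  define X where "X = \<Inter>F"
  have SF: "S \<in> F" using S by (simp add: F_def)
  have XF: "X \<in> F" unfolding X_def using inter[OF finF _ order_refl] SF by blast
  have Xmin: "\<forall>T. sep_out_set V E (k+1) s v T \<longrightarrow> X \<subseteq> T" unfolding X_def F_def by blast
  have XS: "sep_out_set V E (k+1) s v X" using XF by (simp add: F_def)
  have "(THE S. sep_out_set V E (k+1) s v S \<and> (\<forall>T. sep_out_set V E (k+1) s v T \<longrightarrow> S \<subseteq> T)) = X"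
    apply (rule the_equality)
    using XS Xmin apply blast
    using XS Xmin by blast
  moreover have "\<exists>S. sep_out_set V E (k+1) s v S" using S by blast
  ultimately have "Mset V E k s v = Some X" unfolding Mset_def by simp
  then show ?thesis using XS Xmin S by blast
qed

lemma half:
  assumes mg: "multigraph V E"
    and "Ord \<subseteq> V"
    and conn: "\<forall>x\<in>Ord. \<forall>y\<in>Ord. x \<noteq> y \<longrightarrow> edge_connected V E (k+1) x y"
    and "s \<in> Ord" and "a \<in> Ord" and "b \<in> Ord"
    and S: "S \<subseteq> V" "a \<in> S" "b \<notin> S" "out E S = k+1"
  shows "Mset V E k s a \<noteq> Mset V E k s b \<or> Mset_R V E k s a \<noteq> Mset_R V E k s b"
proof -
  have fin: "finite V" and edg: "\<forall>e\<in>#E. fst e \<in> V \<and> snd e \<in> V" using mg by (auto simp: multigraph_def)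
  have lb: "\<forall>T. T \<subseteq> V \<and> v \<in> T \<and> s \<notin> T \<longrightarrow> k+1 \<le> out E T" if "v \<in> Ord" "v \<noteq> s" for v
  proof (intro allI impI)
    fix T assume T: "T \<subseteq> V \<and> v \<in> T \<and> s \<notin> T"
    have "lam V E v s \<ge> k+1" using conn that assms(4) by (auto simp: edge_connected_def)
    then show "k+1 \<le> out E T" by (rule lam_le[OF fin]) (use T in auto)
  qed
  have lbR: "\<forall>T. T \<subseteq> V \<and> v \<in> T \<and> s \<notin> T \<longrightarrow> k+1 \<le> out (rev_edges E) T" if "v \<in> Ord" "v \<noteq> s" for v
  proof (intro allI impI)
    fix T assume T: "T \<subseteq> V \<and> v \<in> T \<and> s \<notin> T"
    have "lam V E s v \<ge> k+1" using conn that assms(4) by (auto simp: edge_connected_def)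
    then have "k+1 \<le> out E (V - T)" by (rule lam_le[OF fin]) (use T assms(2) assms(4) in auto)
    then show "k+1 \<le> out (rev_edges E) T" using out_rev[OF edg] T by simp
  qed
  have mem: "v \<in> X" if "Mset V' E' k s v = Some X" "finite V'" "v \<in> Ord"
    "\<And>v. v \<in> Ord \<Longrightarrow> v \<noteq> s \<Longrightarrow> \<forall>T. T \<subseteq> V' \<and> v \<in> T \<and> s \<notin> T \<longrightarrow> k+1 \<le> out E' T" for v X V' E'
  proof -
    have "\<exists>T. sep_out_set V' E' (k+1) s v T"
    proof (rule ccontr)
      assume "\<not> (\<exists>T. sep_out_set V' E' (k+1) s v T)"
      then have "Mset V' E' k s v = None" unfolding Mset_def by (simp only: if_False)
      with that(1) show False by simp
    qed
    then obtain T where T: "sep_out_set V' E' (k+1) s v T" by blast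
    then have "v \<noteq> s" by (auto simp: sep_out_set_def)
    from Mset_min[OF that(2) that(4)[OF that(3) this] T] that(1) show ?thesis by (auto simp: sep_out_set_def)
  qed
  show ?thesis
  proof (cases "s \<in> S")
    case False
    then have "a \<noteq> s" using S by auto
    have sep: "sep_out_set V E (k+1) s a S" using S False by (simp add: sep_out_set_def)
    obtain X where X: "Mset V E k s a = Some X" "X \<subseteq> S" using Mset_min[OF fin lb[OF assms(5) \<open>a \<noteq> s\<close>] sep] by blast
    have "Mset V E k s b \<noteq> Some X"
    proof
      assume "Mset V E k s b = Some X"
      then have "b \<in> X" by (rule mem[OF _ fin assms(6) lb])
      then show False using X S by auto
    qed
    then show ?thesis using X by auto
  next
    case True
    then have "b \<noteq> s" using S by auto
    have sep: "sep_out_set V (rev_edges E) (k+1) s b (V - S)"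
      using S True assms(2) assms(6) out_rev[OF edg, of "V - S"] by (auto simp: sep_out_set_def Diff_Diff_Int Int_absorb1 double_diff)
    obtain Y where Y: "Mset V (rev_edges E) k s b = Some Y" "Y \<subseteq> V - S"
      using Mset_min[OF fin lbR[OF assms(6) \<open>b \<noteq> s\<close>] sep] by blast
    have "Mset V (rev_edges E) k s a \<noteq> Some Y"
    proof
      assume "Mset V (rev_edges E) k s a = Some Y"
      then have "a \<in> Y" by (rule mem[OF _ fin assms(5) lbR])
      then show False using Y S by auto
    qed
    then show ?thesis using Y by (auto simp: Mset_R_def)
  qed
qed

theorem mainTheorem3:
  fixes V :: "'a set" and E :: "('a \<times> 'a) multiset" and Ord :: "'a set"
    and k :: nat and s u w :: 'a
  assumes "multigraph V E"
    and "strongly_connected V E"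
    and "Ord \<subseteq> V"
    and "\<forall>x\<in>Ord. \<forall>y\<in>Ord. x \<noteq> y \<longrightarrow> edge_connected V E (k+1) x y"
    and "s \<in> Ord"
    and "u \<in> Ord" and "w \<in> Ord" and "u \<noteq> w"
    and "\<not> edge_connected V E (k+2) u w"
  shows "Mset V E k s u \<noteq> Mset V E k s w \<or> Mset_R V E k s u \<noteq> Mset_R V E k s w"
proof -
  have fin: "finite V" using assms(1) by (simp add: multigraph_def)
  have ex: "\<exists>S. S \<subseteq> V \<and> x \<in> S \<and> y \<notin> S \<and> out E S = k+1"
    if xy: "x \<in> Ord" "y \<in> Ord" "x \<noteq> y" "lam V E x y < k+2" for x y
  proof -
    let ?C = "{S. S \<subseteq> V \<and> x \<in> S \<and> y \<notin> S}"
    have finC: "finite ?C" by (rule finite_subset[of _ "Pow V"]) (use fin in auto)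
    have "{x} \<in> ?C" using xy assms(3) by auto
    then have "lam V E x y \<in> out E ` ?C" unfolding lam_def using finC by (intro Min_in) auto
    then obtain S where S2: "lam V E x y = out E S" and S1: "S \<in> ?C" by (rule imageE)
    note S = S1 S2[symmetric]
    have "edge_connected V E (k+1) x y" using assms(4) xy(1,2,3) by blast
    then have "lam V E x y \<ge> k+1" by (simp add: edge_connected_def)
    then have "out E S = k+1" using S(2) xy(4) by linarith
    then show ?thesis using S(1) by blast
  qed
  show ?thesis
  proof (cases "lam V E u w < k+2")
    case True
    from ex[OF assms(6) assms(7) assms(8) True] obtain S where
      S: "S \<subseteq> V" "u \<in> S" "w \<notin> S" "out E S = k+1" by blast
    show ?thesis by (rule half[OF assms(1,3,4,5,6,7) S])
  next
    case False
    then have "lam V E w u < k+2" using assms(9) by (auto simp: edge_connected_def)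
    from ex[OF assms(7) assms(6) assms(8)[symmetric] this] obtain S where
      S: "S \<subseteq> V" "w \<in> S" "u \<notin> S" "out E S = k+1" by blast
    have "Mset V E k s w \<noteq> Mset V E k s u \<or> Mset_R V E k s w \<noteq> Mset_R V E k s u"
      by (rule half[OF assms(1,3,4,5,7,6) S])
    then show ?thesis by auto
  qed
qed

end
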